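(* Let $\Omega\subset\mathbb{R}^N$ be an open bounded set, $q\in L^\infty(\Omega;\mathbb{R}^N)$ and $s\in(0,1)$. Let $u\in\mathcal{L}^1_s(\mathbb{R}^N)\cap\mathcal{C}^2(\Omega)\cap\mathcal{C}(\mathbb{R}^N)$ satisfy $$-\Delta u+(-\Delta)^s u+q\cdot\nabla u\ge0\ \text{ in }\Omega,\qquad u\ge0\ \text{ on }\mathbb{R}^N\setminus\Omega.$$ Then either $u>0$ in $\Omega$ or $u\equiv0$ in $\mathbb{R}^N$.
   Context: The fractional Laplacian is $(-\Delta)^s u(x)=C_{N,s}\lim_{\varepsilon\to0^+}\int_{\mathbb{R}^N\setminus B_\varepsilon(x)}\frac{u(x)-u(y)}{|x-y|^{N+2s}}\,dy$, with $C_{N,s}=\pi^{-N/2}2^{2s}s\,\Gamma(\frac N2+s)/\Gamma(1-s)$. $\mathcal{L}^1_s(\mathbb{R}^N)$ is the space of measurable $u:\mathbb{R}^N\to\mathbb{R}$ with $\int_{\mathbb{R}^N}\frac{|u(y)|}{1+|y|^{N+2s}}\,dy<\infty$. *)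

theory Defs
  imports "HOL-Analysis.Analysis"
begin

definition frac_const :: "nat \<Rightarrow> real \<Rightarrow> real" where
  "frac_const N s = pi powr (- real N / 2) * 2 powr (2 * s) * s
                    * Gamma (real N / 2 + s) / Gamma (1 - s)"

definition frac_lap :: "real \<Rightarrow> ('a::euclidean_space \<Rightarrow> real) \<Rightarrow> 'a \<Rightarrow> real" where
  "frac_lap s u x = frac_const DIM('a) s *
     Lim (at_right 0) (\<lambda>\<epsilon>. (\<integral>y \<in> - ball x \<epsilon>.
            (u x - u y) / norm (x - y) powr (real DIM('a) + 2 * s) \<partial>lebesgue))"

definition L1s :: "real \<Rightarrow> ('a::euclidean_space \<Rightarrow> real) set" where
  "L1s s = {u. u \<in> borel_measurable lebesgue \<and>
      integrable lebesgue (\<lambda>y. \<bar>u y\<bar> / (1 + norm y powr (real DIM('a) + 2 * s)))}"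

definition C2_on :: "'a set \<Rightarrow> ('a::euclidean_space \<Rightarrow> real) \<Rightarrow> bool" where
  "C2_on S u \<longleftrightarrow> (\<exists>G :: 'a \<Rightarrow> 'a. \<exists>H :: 'a \<Rightarrow> ('a \<Rightarrow>\<^sub>L 'a).
     (\<forall>x\<in>S. (u has_derivative (\<lambda>h. G x \<bullet> h)) (at x)) \<and>
     (\<forall>x\<in>S. (G has_derivative blinfun_apply (H x)) (at x)) \<and>
     continuous_on S H)"

definition grad :: "('a::euclidean_space \<Rightarrow> real) \<Rightarrow> 'a \<Rightarrow> 'a" where
  "grad u x = (\<Sum>b\<in>Basis. frechet_derivative u (at x) b *\<^sub>R b)"

definition laplacian :: "('a::euclidean_space \<Rightarrow> real) \<Rightarrow> 'a \<Rightarrow> real" where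
  "laplacian u x = (\<Sum>b\<in>Basis. frechet_derivative (grad u) (at x) b \<bullet> b)"

end

theory Submission
  imports Defs
begin


lemma bl: "f \<in> borel_measurable borel \<Longrightarrow> f \<in> borel_measurable (lebesgue :: 'a::euclidean_space measure)"
  by (simp add: measurable_completion)
lemma ball_borel[measurable]: "ball c r \<in> sets (borel :: 'a::metric_space measure)" by simp

lemma powr_shell_le:
  fixes \<rho> d a :: real
  assumes "0 < \<rho>" "\<rho> \<le> d" "d \<le> 2*\<rho>"
  shows "d powr (-a) \<le> \<rho> powr (-a) + (2*\<rho>) powr (-a)"
proof (cases "a \<le> 0")
  case True
  then have "d powr (-a) \<le> (2*\<rho>) powr (-a)" using assms by (intro powr_mono2) auto
  then show ?thesis by (smt (verit) powr_ge_zero)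
next
  case False
  then have "d powr (-a) \<le> \<rho> powr (-a)" using assms by (intro powr_mono2') auto
  then show ?thesis by (smt (verit) powr_ge_zero)
qed

lemma shell_bound:
  fixes c :: "'a::euclidean_space"
  assumes "0 < \<rho>"
  shows "(\<integral>\<^sup>+y. indicator (ball c (2*\<rho>) - ball c \<rho>) y * ennreal (norm (y - c) powr (-a)) \<partial>lebesgue)
     \<le> ennreal ((\<rho> powr (-a) + (2*\<rho>) powr (-a)) * (2*\<rho>)^DIM('a)) * emeasure lebesgue (ball (0::'a) 1)"
proof -
  have "(\<integral>\<^sup>+y. indicator (ball c (2*\<rho>) - ball c \<rho>) y * ennreal (norm (y - c) powr (-a)) \<partial>lebesgue)
     \<le> (\<integral>\<^sup>+y. ennreal (\<rho> powr (-a) + (2*\<rho>) powr (-a)) * indicator (ball c (2*\<rho>)) y \<partial>lebesgue)"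
  proof (rule nn_integral_mono)
    fix y
    show "indicator (ball c (2*\<rho>) - ball c \<rho>) y * ennreal (norm (y - c) powr (-a))
       \<le> ennreal (\<rho> powr (-a) + (2*\<rho>) powr (-a)) * indicator (ball c (2*\<rho>)) y"
    proof (cases "y \<in> ball c (2*\<rho>) - ball c \<rho>")
      case True
      then have "\<rho> \<le> norm (y - c)" "norm (y - c) \<le> 2*\<rho>"
        by (auto simp: dist_norm norm_minus_commute)
      then have "norm (y - c) powr (-a) \<le> \<rho> powr (-a) + (2*\<rho>) powr (-a)"
        using powr_shell_le assms by blast
      then have "ennreal (norm (y - c) powr (-a)) \<le> ennreal (\<rho> powr (-a) + (2*\<rho>) powr (-a))"
        by (rule ennreal_leI)
      then show ?thesis using True by (simp add: indicator_def del: ennreal_plus)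
    next
      case False
      then show ?thesis by auto
    qed
  qed
  also have "\<dots> = ennreal (\<rho> powr (-a) + (2*\<rho>) powr (-a)) * emeasure lebesgue (ball c (2*\<rho>))"
    by (rule nn_integral_cmult_indicator) auto
  also have "\<dots> = ennreal (\<rho> powr (-a) + (2*\<rho>) powr (-a)) * (ennreal ((2*\<rho>)^DIM('a)) * emeasure lebesgue (ball (0::'a) 1))"
    using assms by (subst emeasure_lebesgue_ball_conv_unit_ball) auto
  also have "\<dots> = ennreal ((\<rho> powr (-a) + (2*\<rho>) powr (-a)) * (2*\<rho>)^DIM('a)) * emeasure lebesgue (ball (0::'a) 1)"
    using assms by (simp add: ennreal_mult' mult.assoc)
  finally show ?thesis .
qed

lemma sum_bound_finite:
  fixes F :: "'b \<Rightarrow> ennreal"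
  assumes "\<And>y. F y \<le> (\<Sum>k. G k y)" "\<And>k. G k \<in> borel_measurable M"
    "\<And>k. (\<integral>\<^sup>+y. G k y \<partial>M) \<le> ennreal (B * q^k)" "0 \<le> B" "0 \<le> q" "q < 1"
  shows "(\<integral>\<^sup>+y. F y \<partial>M) < \<infinity>"
proof -
  have "(\<integral>\<^sup>+y. F y \<partial>M) \<le> (\<integral>\<^sup>+y. (\<Sum>k. G k y) \<partial>M)"
    by (intro nn_integral_mono assms(1))
  also have "\<dots> = (\<Sum>k. \<integral>\<^sup>+y. G k y \<partial>M)"
    by (rule nn_integral_suminf) (use assms in auto)
  also have "\<dots> \<le> (\<Sum>k. ennreal (B*q^k))"
    by (intro suminf_le summableI assms(3))
  also have "\<dots> = ennreal (\<Sum>k. B*q^k)"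
    using assms by (intro suminf_ennreal2) (auto intro!: summable_mult summable_geometric)
  finally show ?thesis by (metis ennreal_less_top infinity_ennreal_def order.strict_trans1)
qed

lemma unit_ball_fin: "emeasure lebesgue (ball (0::'a::euclidean_space) 1) = ennreal (measure lebesgue (ball (0::'a) 1))"
  by (rule emeasure_eq_measure2) simp

lemma near_finite:
  fixes c :: "'a::euclidean_space"
  assumes "0 < r" "a < real DIM('a)"
  shows "(\<integral>\<^sup>+y. indicator (ball c r) y * ennreal (norm (y - c) powr (-a)) \<partial>lebesgue) < \<infinity>"
proof -
  define V where "V = measure lebesgue (ball (0::'a) 1)"
  define C where "C = (1 + 2 powr (-a)) * 2^DIM('a) * V"
  define e where "e = real DIM('a) - a"
  have e: "0 < e" using assms unfolding e_def by simp
  define \<rho> where "\<rho> k = r / 2 ^ Suc k" for k :: nat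
  have \<rho>pos: "0 < \<rho> k" for k using assms by (simp add: \<rho>_def)
  show ?thesis
  proof (rule sum_bound_finite[where G="\<lambda>k y. indicator (ball c (2*\<rho> k) - ball c (\<rho> k)) y * ennreal (norm (y - c) powr (-a))"
        and B="C * (r/2) powr e" and q="(1/2) powr e"])
    fix y
    show "indicator (ball c r) y * ennreal (norm (y - c) powr (-a)) \<le>
      (\<Sum>k. indicator (ball c (2*\<rho> k) - ball c (\<rho> k)) y * ennreal (norm (y - c) powr (-a)))"
    proof (cases "y \<in> ball c r \<and> y \<noteq> c")
      case False
      then show ?thesis by (auto simp: indicator_def)
    next
      case True
      define d where "d = norm (y - c)"
      have d: "0 < d" "d < r" using True by (auto simp: d_def dist_norm norm_minus_commute)
      have ex: "\<exists>n. r / 2^n \<le> d"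
      proof -
        obtain n where "r / d < 2 ^ n" using real_arch_pow[of 2 "r/d"] by auto
        then show ?thesis using d by (intro exI[of _ n]) (auto simp: field_simps)
      qed
      define n where "n = (LEAST n. r / 2^n \<le> d)"
      have n1: "r / 2^n \<le> d" unfolding n_def using LeastI_ex[OF ex] .
      have "n \<noteq> 0"
      proof
        assume "n = 0" with n1 d show False by simp
      qed
      then obtain k where k: "n = Suc k" using not0_implies_Suc by blast
      have "\<not> r / 2^k \<le> d" using not_less_Least[of k "\<lambda>n. r / 2^n \<le> d"] k n_def by auto
      then have "y \<in> ball c (2*\<rho> k) - ball c (\<rho> k)"
        using n1 k by (auto simp: \<rho>_def d_def dist_norm norm_minus_commute)
      then have "indicator (ball c r) y * ennreal (norm (y - c) powr (-a)) =
         indicator (ball c (2*\<rho> k) - ball c (\<rho> k)) y * ennreal (norm (y - c) powr (-a))"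
        using True by simp
      also have "\<dots> \<le> (\<Sum>k. indicator (ball c (2*\<rho> k) - ball c (\<rho> k)) y * ennreal (norm (y - c) powr (-a)))"
      proof -
        have single: "\<And>f::nat\<Rightarrow>ennreal. f k \<le> suminf f"
          using sum_le_suminf[OF summableI, of "{k}"] by simp
        show ?thesis
          by (rule single[of "\<lambda>k. indicator (ball c (2*\<rho> k) - ball c (\<rho> k)) y * ennreal (norm (y - c) powr (-a))"])
      qed
      finally show ?thesis .
    qed
  next
    fix k
    show "(\<lambda>y. indicator (ball c (2*\<rho> k) - ball c (\<rho> k)) y * ennreal (norm (y - c) powr (-a))) \<in> borel_measurable lebesgue"
      by (intro bl) measurable
  next
    fix k
    have "(\<integral>\<^sup>+y. indicator (ball c (2*\<rho> k) - ball c (\<rho> k)) y * ennreal (norm (y - c) powr (-a)) \<partial>lebesgue)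
      \<le> ennreal ((\<rho> k powr (-a) + (2*\<rho> k) powr (-a)) * (2*\<rho> k)^DIM('a)) * emeasure lebesgue (ball (0::'a) 1)"
      by (rule shell_bound[OF \<rho>pos])
    also have "\<dots> = ennreal ((\<rho> k powr (-a) + (2*\<rho> k) powr (-a)) * (2*\<rho> k)^DIM('a) * V)"
      unfolding unit_ball_fin V_def by (rule ennreal_mult''[symmetric]) simp
    also have "(\<rho> k powr (-a) + (2*\<rho> k) powr (-a)) * (2*\<rho> k)^DIM('a) * V = C * \<rho> k powr e"
    proof -
      have "(2*\<rho> k) powr (-a) = 2 powr (-a) * \<rho> k powr (-a)" using \<rho>pos by (simp add: powr_mult)
      moreover have "(2*\<rho> k)^DIM('a) = 2^DIM('a) * \<rho> k powr (real DIM('a))"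
        using \<rho>pos by (simp add: powr_realpow power_mult_distrib)
      moreover have "\<rho> k powr (-a) * \<rho> k powr (real DIM('a)) = \<rho> k powr e"
        by (simp add: e_def powr_add[symmetric])
      moreover have "\<And>X t P Q V :: real. (X + t * X) * (P * Q) * V = (1 + t) * P * V * (X*Q)"
        by algebra
      ultimately show ?thesis unfolding C_def by metis
    qed
    also have "\<rho> k powr e = (r/2) powr e * ((1/2) powr e)^k"
    proof -
      have h: "\<rho> k = (r/2) * (1/2)^k" by (simp add: \<rho>_def field_simps)
      have h2: "\<rho> k powr e = (r/2) powr e * ((1/2::real)^k) powr e"
        unfolding h by (rule powr_mult)
      moreover have "((1/2::real)^k) powr e = ((1/2) powr e)^k"
      proof -
        have "((1/2::real)^k) powr e = ((1/2) powr real k) powr e" by (simp add: powr_realpow)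
        also have "\<dots> = (1/2) powr (real k * e)" by (simp add: powr_powr)
        also have "\<dots> = ((1/2) powr e)^k" by (simp add: powr_power)
        finally show ?thesis .
      qed
      ultimately show ?thesis by simp
    qed
    finally show "(\<integral>\<^sup>+y. indicator (ball c (2*\<rho> k) - ball c (\<rho> k)) y * ennreal (norm (y - c) powr (-a)) \<partial>lebesgue)
      \<le> ennreal (C * (r/2) powr e * ((1/2) powr e)^k)" by (simp add: mult.assoc)
  next
    show "0 \<le> C * (r/2) powr e" unfolding C_def V_def by simp
    show "0 \<le> (1/2::real) powr e" by simp
    show "(1/2::real) powr e < 1" using powr_less_mono2[of e "1/2" 1] e by simp
  qed
qed

lemma far_finite:
  fixes c :: "'a::euclidean_space"
  assumes "0 < r" "a > real DIM('a)"
  shows "(\<integral>\<^sup>+y. indicator (- ball c r) y * ennreal (norm (y - c) powr (-a)) \<partial>lebesgue) < \<infinity>"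
proof -
  define V where "V = measure lebesgue (ball (0::'a) 1)"
  define C where "C = (1 + 2 powr (-a)) * 2^DIM('a) * V"
  define e where "e = a - real DIM('a)"
  have e: "0 < e" using assms unfolding e_def by simp
  define \<rho> where "\<rho> k = r * 2 ^ k" for k :: nat
  have \<rho>pos: "0 < \<rho> k" for k using assms by (simp add: \<rho>_def)
  show ?thesis
  proof (rule sum_bound_finite[where G="\<lambda>k y. indicator (ball c (2*\<rho> k) - ball c (\<rho> k)) y * ennreal (norm (y - c) powr (-a))"
        and B="C * r powr (-e)" and q="2 powr (-e)"])
    fix y
    show "indicator (- ball c r) y * ennreal (norm (y - c) powr (-a)) \<le>
      (\<Sum>k. indicator (ball c (2*\<rho> k) - ball c (\<rho> k)) y * ennreal (norm (y - c) powr (-a)))"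
    proof (cases "y \<in> ball c r")
      case True
      then show ?thesis by (auto simp: indicator_def)
    next
      case False
      define d where "d = norm (y - c)"
      have d: "r \<le> d" using False by (auto simp: d_def dist_norm norm_minus_commute)
      have ex: "\<exists>n. d < r * 2^n"
      proof -
        obtain n where "d / r < 2 ^ n" using real_arch_pow[of 2 "d/r"] by auto
        then show ?thesis using assms by (intro exI[of _ n]) (auto simp: field_simps)
      qed
      define n where "n = (LEAST n. d < r * 2^n)"
      have n1: "d < r * 2^n" unfolding n_def using LeastI_ex[OF ex] .
      have "n \<noteq> 0"
      proof
        assume "n = 0" with n1 d show False by simp
      qed
      then obtain k where k: "n = Suc k" using not0_implies_Suc by blast
      have "\<not> d < r * 2^k" using not_less_Least[of k "\<lambda>n. d < r * 2^n"] k n_def by auto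
      then have "y \<in> ball c (2*\<rho> k) - ball c (\<rho> k)"
        using n1 k by (auto simp: \<rho>_def d_def dist_norm norm_minus_commute)
      then have "indicator (- ball c r) y * ennreal (norm (y - c) powr (-a)) =
         indicator (ball c (2*\<rho> k) - ball c (\<rho> k)) y * ennreal (norm (y - c) powr (-a))"
        using False by simp
      also have "\<dots> \<le> (\<Sum>k. indicator (ball c (2*\<rho> k) - ball c (\<rho> k)) y * ennreal (norm (y - c) powr (-a)))"
      proof -
        have single: "\<And>f::nat\<Rightarrow>ennreal. f k \<le> suminf f"
          using sum_le_suminf[OF summableI, of "{k}"] by simp
        show ?thesis
          by (rule single[of "\<lambda>k. indicator (ball c (2*\<rho> k) - ball c (\<rho> k)) y * ennreal (norm (y - c) powr (-a))"])
      qed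
      finally show ?thesis .
    qed
  next
    fix k
    show "(\<lambda>y. indicator (ball c (2*\<rho> k) - ball c (\<rho> k)) y * ennreal (norm (y - c) powr (-a))) \<in> borel_measurable lebesgue"
      by (intro bl) measurable
  next
    fix k
    have "(\<integral>\<^sup>+y. indicator (ball c (2*\<rho> k) - ball c (\<rho> k)) y * ennreal (norm (y - c) powr (-a)) \<partial>lebesgue)
      \<le> ennreal ((\<rho> k powr (-a) + (2*\<rho> k) powr (-a)) * (2*\<rho> k)^DIM('a)) * emeasure lebesgue (ball (0::'a) 1)"
      by (rule shell_bound[OF \<rho>pos])
    also have "\<dots> = ennreal ((\<rho> k powr (-a) + (2*\<rho> k) powr (-a)) * (2*\<rho> k)^DIM('a) * V)"
      unfolding unit_ball_fin V_def by (rule ennreal_mult''[symmetric]) simp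
    also have "(\<rho> k powr (-a) + (2*\<rho> k) powr (-a)) * (2*\<rho> k)^DIM('a) * V = C * \<rho> k powr (-e)"
    proof -
      have "(2*\<rho> k) powr (-a) = 2 powr (-a) * \<rho> k powr (-a)" using \<rho>pos by (simp add: powr_mult)
      moreover have "(2*\<rho> k)^DIM('a) = 2^DIM('a) * \<rho> k powr (real DIM('a))"
        using \<rho>pos by (simp add: powr_realpow power_mult_distrib)
      moreover have "\<rho> k powr (-a) * \<rho> k powr (real DIM('a)) = \<rho> k powr (-e)"
        by (simp add: e_def powr_add[symmetric])
      moreover have "\<And>X t P Q V :: real. (X + t * X) * (P * Q) * V = (1 + t) * P * V * (X*Q)"
        by algebra
      ultimately show ?thesis unfolding C_def by metis
    qed
    also have "\<rho> k powr (-e) = r powr (-e) * (2 powr (-e))^k"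
      using assms by (simp add: \<rho>_def powr_mult powr_power[symmetric] powr_powr powr_realpow[symmetric] mult.commute)
    finally show "(\<integral>\<^sup>+y. indicator (ball c (2*\<rho> k) - ball c (\<rho> k)) y * ennreal (norm (y - c) powr (-a)) \<partial>lebesgue)
      \<le> ennreal (C * r powr (-e) * (2 powr (-e))^k)" by (simp add: mult.assoc)
  next
    show "0 \<le> C * r powr (-e)" unfolding C_def V_def by simp
    show "0 \<le> (2::real) powr (-e)" by simp
    show "(2::real) powr (-e) < 1" using e by (simp add: powr_less_one)
  qed
qed



lemma line_deriv:
  fixes u :: "'a::euclidean_space \<Rightarrow> real"
  assumes "(u has_derivative (\<lambda>h. G \<bullet> h)) (at (x0 + t *\<^sub>R b))"
  shows "((\<lambda>t. u (x0 + t *\<^sub>R b)) has_real_derivative (G \<bullet> b)) (at t)"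
proof -
  have "((\<lambda>r. x0 + r *\<^sub>R b) has_derivative (\<lambda>r. r *\<^sub>R b)) (at t)"
    by (intro derivative_eq_intros) auto
  then have "((\<lambda>r. u (x0 + r *\<^sub>R b)) has_derivative (\<lambda>k. G \<bullet> (k *\<^sub>R b))) (at t)"
    by (rule has_derivative_compose) (rule assms)
  moreover have "(\<lambda>k. G \<bullet> (k *\<^sub>R b)) = (*) (G \<bullet> b)" by (auto simp: mult.commute)
  ultimately show ?thesis
    unfolding has_field_derivative_def by simp
qed

lemma hess_nonneg:
  fixes u :: "'a::euclidean_space \<Rightarrow> real" and G :: "'a \<Rightarrow> 'a"
  assumes "open \<Omega>" "x0 \<in> \<Omega>"
    and du: "\<forall>x\<in>\<Omega>. (u has_derivative (\<lambda>h. G x \<bullet> h)) (at x)"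
    and dG: "(G has_derivative blinfun_apply H0) (at x0)"
    and min: "\<forall>y. u x0 \<le> u y" and G0: "G x0 = 0"
  shows "blinfun_apply H0 b \<bullet> b \<ge> 0"
proof (rule ccontr)
  assume "\<not> ?thesis"
  then have c: "blinfun_apply H0 b \<bullet> b < 0" by simp
  define c where "c = blinfun_apply H0 b \<bullet> b"
  have bnz: "b \<noteq> 0" using c by auto
  then have nb: "norm b > 0" by simp
  define e where "e = - c / (2 * norm b ^ 2)"
  have e: "e > 0" using c nb unfolding e_def c_def by (intro divide_pos_pos) auto
  obtain d where d: "d > 0" "\<And>y. norm (y - x0) < d \<Longrightarrow> norm (G y - G x0 - blinfun_apply H0 (y - x0)) \<le> e * norm (y - x0)"
    using dG e unfolding has_derivative_at_alt by blast
  obtain \<delta> where \<delta>: "\<delta> > 0" "ball x0 \<delta> \<subseteq> \<Omega>"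
    using assms(1,2) open_contains_ball by blast
  define t0 where "t0 = min d \<delta> / (2 * norm b)"
  have t0: "t0 > 0" using d \<delta> nb unfolding t0_def by simp
  have small: "norm (t *\<^sub>R b) < min d \<delta>" if "0 \<le> t" "t \<le> t0" for t
  proof -
    have "norm (t *\<^sub>R b) = t * norm b" using that by simp
    also have "\<dots> \<le> t0 * norm b" using that nb by (simp add: mult_right_mono)
    also have "\<dots> < min d \<delta>" using nb d \<delta> unfolding t0_def by (simp add: field_simps min_def)
    finally show ?thesis .
  qed
  have inO: "x0 + t *\<^sub>R b \<in> \<Omega>" if "0 \<le> t" "t \<le> t0" for t
    using small[OF that] \<delta> by (auto simp: dist_norm)
  have neg: "G (x0 + t *\<^sub>R b) \<bullet> b < 0" if "0 < t" "t \<le> t0" for t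
  proof -
    let ?y = "x0 + t *\<^sub>R b"
    have "norm (?y - x0) < d" using small[of t] that by simp
    then have "norm (G ?y - G x0 - blinfun_apply H0 (?y - x0)) \<le> e * norm (?y - x0)" by (rule d(2))
    then have 1: "norm (G ?y - t *\<^sub>R blinfun_apply H0 b) \<le> e * (t * norm b)"
      using that G0 by (simp add: blinfun.scaleR_right)
    have "G ?y \<bullet> b = (G ?y - t *\<^sub>R blinfun_apply H0 b) \<bullet> b + t * c"
      unfolding c_def by (simp add: inner_diff_left)
    also have "(G ?y - t *\<^sub>R blinfun_apply H0 b) \<bullet> b \<le> norm (G ?y - t *\<^sub>R blinfun_apply H0 b) * norm b"
      by (rule norm_cauchy_schwarz)
    also have "\<dots> \<le> e * (t * norm b) * norm b" using 1 nb by (simp add: mult_right_mono)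
    also have "e * (t * norm b) * norm b = - c * t / 2"
      using nb unfolding e_def by (simp add: field_simps power2_eq_square)
    finally have "G ?y \<bullet> b \<le> - c * t / 2 + t * c" by simp
    moreover have "t * c < 0" using that c unfolding c_def by (simp add: mult_pos_neg)
    moreover have "- c * t / 2 + t * c = t * c / 2" by (simp add: field_simps)
    ultimately show ?thesis by linarith
  qed
  have "\<exists>z. 0 < z \<and> z < t0 \<and> u (x0 + t0 *\<^sub>R b) - u (x0 + 0 *\<^sub>R b) = (t0 - 0) * (G (x0 + z *\<^sub>R b) \<bullet> b)"
  proof (rule MVT2)
    show "0 < t0" by fact
    fix t assume "0 \<le> t" "t \<le> t0"
    then show "((\<lambda>t. u (x0 + t *\<^sub>R b)) has_real_derivative (G (x0 + t *\<^sub>R b) \<bullet> b)) (at t)"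
      using inO du by (intro line_deriv) auto
  qed
  then obtain z where z: "0 < z" "z < t0" "u (x0 + t0 *\<^sub>R b) - u x0 = t0 * (G (x0 + z *\<^sub>R b) \<bullet> b)"
    by auto
  have "t0 * (G (x0 + z *\<^sub>R b) \<bullet> b) < 0" using neg[of z] z t0 by (simp add: mult_pos_neg)
  then show False using z min by (smt (verit))
qed

lemma quad_bound:
  fixes u :: "'a::euclidean_space \<Rightarrow> real" and G :: "'a \<Rightarrow> 'a"
  assumes "open \<Omega>" "x0 \<in> \<Omega>"
    and du: "\<forall>x\<in>\<Omega>. (u has_derivative (\<lambda>h. G x \<bullet> h)) (at x)"
    and dG: "(G has_derivative blinfun_apply H0) (at x0)"
    and G0: "G x0 = 0"
  shows "\<exists>r>0. \<exists>K\<ge>0. ball x0 r \<subseteq> \<Omega> \<and> (\<forall>y\<in>ball x0 r. \<bar>u y - u x0\<bar> \<le> K * norm (y - x0)^2)"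
proof -
  obtain d where d: "d > 0" "\<And>y. norm (y - x0) < d \<Longrightarrow> norm (G y - G x0 - blinfun_apply H0 (y - x0)) \<le> 1 * norm (y - x0)"
    using dG unfolding has_derivative_at_alt by (meson zero_less_one)
  obtain \<delta> where \<delta>: "\<delta> > 0" "ball x0 \<delta> \<subseteq> \<Omega>"
    using assms(1,2) open_contains_ball by blast
  define r where "r = min d \<delta>"
  define K where "K = norm H0 + 1"
  have r: "r > 0" "ball x0 r \<subseteq> \<Omega>" using d \<delta> unfolding r_def by auto
  have K: "K \<ge> 0" unfolding K_def by simp
  have Gb: "norm (G z) \<le> K * norm (z - x0)" if "z \<in> ball x0 r" for z
  proof -
    have "norm (z - x0) < d" using that unfolding r_def by (auto simp: dist_norm norm_minus_commute)
    then have 1: "norm (G z - blinfun_apply H0 (z - x0)) \<le> norm (z - x0)" using d(2) G0 by fastforce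
    have "norm (G z) \<le> norm (G z - blinfun_apply H0 (z - x0)) + norm (blinfun_apply H0 (z - x0))"
      by (metis norm_triangle_ineq diff_add_cancel)
    also have "\<dots> \<le> norm (z - x0) + norm H0 * norm (z - x0)"
      using 1 norm_blinfun[of H0 "z - x0"] by linarith
    finally show ?thesis unfolding K_def by (simp add: algebra_simps)
  qed
  have "\<forall>y\<in>ball x0 r. \<bar>u y - u x0\<bar> \<le> K * norm (y - x0)^2"
  proof
    fix y assume y: "y \<in> ball x0 r"
    define \<rho> where "\<rho> = norm (y - x0)"
    have S: "cball x0 \<rho> \<subseteq> ball x0 r" using y unfolding \<rho>_def by (auto simp: dist_norm norm_minus_commute)
    have "norm (u y - u x0) \<le> (K * \<rho>) * norm (y - x0)"
    proof (rule differentiable_bound[of "cball x0 \<rho>"])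
      show "convex (cball x0 \<rho>)" by simp
      fix z assume z: "z \<in> cball x0 \<rho>"
      then have zO: "z \<in> \<Omega>" using S r by auto
      show "(u has_derivative (\<lambda>h. G z \<bullet> h)) (at z within cball x0 \<rho>)"
        using du zO by (auto intro: has_derivative_at_withinI)
      have "norm (G z) \<le> K * \<rho>"
      proof -
        have "norm (G z) \<le> K * norm (z - x0)" using Gb z S by auto
        also have "\<dots> \<le> K * \<rho>" using z K by (intro mult_left_mono) (auto simp: dist_norm norm_minus_commute)
        finally show ?thesis .
      qed
      then show "onorm (\<lambda>h. G z \<bullet> h) \<le> K * \<rho>"
      proof (intro onorm_le)
        fix h
        have "norm (G z \<bullet> h) \<le> norm (G z) * norm h" using Cauchy_Schwarz_ineq2 by simp
        also have "\<dots> \<le> K * \<rho> * norm h" using \<open>norm (G z) \<le> K * \<rho>\<close> by (simp add: mult_right_mono)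
        finally show "norm (G z \<bullet> h) \<le> K * \<rho> * norm h" .
      qed
    next
      show "y \<in> cball x0 \<rho>" unfolding \<rho>_def by (simp add: dist_norm norm_minus_commute)
      show "x0 \<in> cball x0 \<rho>" unfolding \<rho>_def by simp
    qed
    then show "\<bar>u y - u x0\<bar> \<le> K * norm (y - x0)^2" unfolding \<rho>_def by (simp add: power2_eq_square mult.assoc)
  qed
  then show ?thesis using r K by blast
qed



lemma int_from_nn:
  fixes c :: "'a::euclidean_space"
  assumes "A \<in> sets borel" "(\<integral>\<^sup>+y. indicator A y * ennreal (norm (y - c) powr (-a)) \<partial>lebesgue) < \<infinity>"
  shows "integrable lebesgue (\<lambda>y. indicator A y * norm (y - c) powr (-a))"
proof (rule integrableI_nonneg)
  show "(\<lambda>y. indicator A y * norm (y - c) powr (-a)) \<in> borel_measurable lebesgue"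
  proof -
    have [measurable]: "A \<in> sets borel" by (rule assms(1))
    show ?thesis by (intro bl) measurable
  qed
  show "AE x in lebesgue. 0 \<le> indicator A x * norm (x - c) powr (-a)" by simp
  have "(\<integral>\<^sup>+y. ennreal (indicator A y * norm (y - c) powr (-a)) \<partial>lebesgue)
     = (\<integral>\<^sup>+y. indicator A y * ennreal (norm (y - c) powr (-a)) \<partial>lebesgue)"
    by (intro nn_integral_cong) (simp add: indicator_def)
  then show "(\<integral>\<^sup>+y. ennreal (indicator A y * norm (y - c) powr (-a)) \<partial>lebesgue) < \<infinity>"
    using assms(2) by simp
qed

lemma g_integrable:
  fixes u :: "'a::euclidean_space \<Rightarrow> real"
  assumes cont: "continuous_on UNIV u" and L: "u \<in> L1s s" and s: "0 < s" "s < 1"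
    and r: "r > 0" and K: "K \<ge> 0"
    and quad: "\<forall>y\<in>ball x0 r. \<bar>u y - u x0\<bar> \<le> K * norm (y - x0)^2"
  shows "integrable lebesgue (\<lambda>y. (u x0 - u y) / norm (x0 - y) powr (real DIM('a) + 2 * s))"
proof -
  define p where "p = real DIM('a) + 2 * s"
  define K2 where "K2 = (norm x0 / r + 1) powr p + r powr (-p)"
  have p: "p > 0" "p - 2 < real DIM('a)" "p > real DIM('a)" using s unfolding p_def by auto
  have [measurable]: "u \<in> borel_measurable borel" using cont by (rule borel_measurable_continuous_onI)
  define h where "h y = K * (indicator (ball x0 r) y * norm (y - x0) powr (-(p-2)))
     + \<bar>u x0\<bar> * (indicator (- ball x0 r) y * norm (y - x0) powr (-p))
     + K2 * (\<bar>u y\<bar> / (1 + norm y powr p))" for y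
  have ih: "integrable lebesgue h"
  proof -
    have 1: "integrable lebesgue (\<lambda>y. indicator (ball x0 r) y * norm (y - x0) powr (-(p-2)))"
      by (rule int_from_nn) (use near_finite[OF r p(2)] in auto)
    have 2: "integrable lebesgue (\<lambda>y. indicator (- ball x0 r) y * norm (y - x0) powr (-p))"
      by (rule int_from_nn) (use far_finite[OF r p(3)] in auto)
    have 3: "integrable lebesgue (\<lambda>y. \<bar>u y\<bar> / (1 + norm y powr p))"
      using L unfolding L1s_def p_def by simp
    show ?thesis unfolding h_def
      using 1 2 3 by (intro Bochner_Integration.integrable_add integrable_mult_right)
  qed
  have hnn: "0 \<le> h y" for y
    unfolding h_def using K by (intro add_nonneg_nonneg mult_nonneg_nonneg) (auto simp: K2_def)
  have bound: "\<bar>(u x0 - u y) / norm (x0 - y) powr p\<bar> \<le> h y" for y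
  proof (cases "y = x0")
    case True
    then show ?thesis using hnn[of y] by simp
  next
    case False
    define d where "d = norm (y - x0)"
    have d: "d > 0" using False unfolding d_def by simp
    have dd: "norm (x0 - y) = d" unfolding d_def by (simp add: norm_minus_commute)
    show ?thesis
    proof (cases "y \<in> ball x0 r")
      case True
      have "\<bar>(u x0 - u y) / norm (x0 - y) powr p\<bar> = \<bar>u y - u x0\<bar> / d powr p"
        unfolding dd by (simp add: abs_minus_commute)
      also have "\<dots> \<le> K * d^2 / d powr p"
        using bspec[OF quad True] by (intro divide_right_mono) (simp_all add: d_def)
      also have "K * d^2 / d powr p = K * d powr (-(p-2))"
      proof -
        have e: "-(p-2) = 2 - p" by simp
        have "d powr (-(p-2)) = d powr 2 / d powr p" by (simp only: e powr_diff)
        moreover have "d powr 2 = d^2" using powr_realpow[of d 2] d by simp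
        ultimately show ?thesis by simp
      qed
      also have "\<dots> \<le> h y"
      proof -
        have "0 \<le> K2 * (\<bar>u y\<bar> / (1 + norm y powr p))"
          unfolding K2_def by (intro mult_nonneg_nonneg divide_nonneg_pos) (auto intro: add_pos_nonneg)
        then show ?thesis unfolding h_def d_def using True by simp
      qed
      finally show ?thesis .
    next
      case False
      have dr: "r \<le> d" using False unfolding d_def by (auto simp: dist_norm norm_minus_commute)
      have yb: "norm y \<le> (norm x0 / r + 1) * d"
      proof -
        have "norm y \<le> norm x0 + d" unfolding d_def by (metis norm_triangle_sub add.commute norm_minus_commute)
        also have "norm x0 \<le> norm x0 / r * d"
        proof -
          have "norm x0 / r * r \<le> norm x0 / r * d" using dr r by (intro mult_left_mono) auto
          then show ?thesis using r by simp
        qed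
        finally show ?thesis by (simp add: algebra_simps)
      qed
      have w: "1 + norm y powr p \<le> K2 * d powr p"
      proof -
        have "norm y powr p \<le> ((norm x0 / r + 1) * d) powr p" using yb p by (intro powr_mono2) auto
        also have "\<dots> = (norm x0 / r + 1) powr p * d powr p" using r d by (simp add: powr_mult)
        finally have a: "norm y powr p \<le> (norm x0 / r + 1) powr p * d powr p" .
        have "1 \<le> (d / r) powr p" using dr r p by (intro ge_one_powr_ge_zero) auto
        also have "(d / r) powr p = r powr (-p) * d powr p"
          using r d by (simp add: powr_divide powr_minus field_simps)
        finally show ?thesis using a unfolding K2_def by (simp add: algebra_simps)
      qed
      have "\<bar>(u x0 - u y) / norm (x0 - y) powr p\<bar> \<le> (\<bar>u x0\<bar> + \<bar>u y\<bar>) / d powr p"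
        unfolding dd using d by (simp add: abs_divide divide_right_mono abs_triangle_ineq4)
      also have "\<dots> = \<bar>u x0\<bar> * d powr (-p) + \<bar>u y\<bar> / d powr p"
        by (simp add: add_divide_distrib powr_minus divide_inverse distrib_right)
      also have "\<bar>u y\<bar> / d powr p \<le> K2 * (\<bar>u y\<bar> / (1 + norm y powr p))"
      proof -
        have pos: "0 < 1 + norm y powr p" by (smt (verit) powr_ge_zero)
        have "\<bar>u y\<bar> * (1 + norm y powr p) \<le> \<bar>u y\<bar> * (K2 * d powr p)"
          using w by (intro mult_left_mono) auto
        then show ?thesis using pos d by (simp add: field_simps)
      qed
      also have "\<bar>u x0\<bar> * d powr (-p) + K2 * (\<bar>u y\<bar> / (1 + norm y powr p)) = h y"
        unfolding h_def using False by (simp add: d_def)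
      finally show ?thesis by simp
    qed
  qed
  show ?thesis unfolding p_def[symmetric]
  proof (rule Bochner_Integration.integrable_bound[OF ih])
    show "(\<lambda>y. (u x0 - u y) / norm (x0 - y) powr p) \<in> borel_measurable lebesgue"
      by (intro bl) measurable
    show "AE y in lebesgue. norm ((u x0 - u y) / norm (x0 - y) powr p) \<le> norm (h y)"
      using bound hnn by simp
  qed
qed


theorem theorem3p1:
  fixes \<Omega> :: "'a::euclidean_space set" and q :: "'a \<Rightarrow> 'a" and s :: real and u :: "'a \<Rightarrow> real"
  assumes "open \<Omega>" and "bounded \<Omega>"
    and "q \<in> borel_measurable (restrict_space lebesgue \<Omega>)"
    and "\<exists>M. AE x in lebesgue. x \<in> \<Omega> \<longrightarrow> norm (q x) \<le> M"
    and "0 < s" and "s < 1"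
    and "u \<in> L1s s" and "C2_on \<Omega> u" and "continuous_on UNIV u"
    and "\<forall>x\<in>\<Omega>. - laplacian u x + frac_lap s u x + q x \<bullet> grad u x \<ge> 0"
    and "\<forall>x\<in>- \<Omega>. u x \<ge> 0"
  shows "(\<forall>x\<in>\<Omega>. u x > 0) \<or> (\<forall>x. u x = 0)"
proof -
  note opn = assms(1) and bnd = assms(2) and s = assms(5,6) and L = assms(7)
    and cont = assms(9) and ineq = assms(10) and outside = assms(11)
  obtain G :: "'a \<Rightarrow> 'a" and H :: "'a \<Rightarrow> ('a \<Rightarrow>\<^sub>L 'a)" where
    du: "\<forall>x\<in>\<Omega>. (u has_derivative (\<lambda>h. G x \<bullet> h)) (at x)" and
    dG: "\<forall>x\<in>\<Omega>. (G has_derivative blinfun_apply (H x)) (at x)"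
    using assms(8) unfolding C2_on_def by blast
  show ?thesis
  proof (rule ccontr)
    assume neg: "\<not> ?thesis"
    then obtain x1 where x1: "x1 \<in> \<Omega>" "u x1 \<le> 0" by (auto simp: not_less)
    from neg have nz: "\<exists>y. u y \<noteq> 0" by auto
    have cpt: "compact (closure \<Omega>)" using bnd by (simp add: compact_closure)
    obtain xm where xm: "xm \<in> closure \<Omega>" "\<forall>y\<in>closure \<Omega>. u xm \<le> u y"
    proof -
      have ne: "closure \<Omega> \<noteq> {}" using x1 closure_subset by auto
      have "continuous_on (closure \<Omega>) u" using cont continuous_on_subset by blast
      then show ?thesis using continuous_attains_inf[OF cpt ne] that by blast
    qed
    define x0 where "x0 = (if u xm < 0 then xm else x1)"
    have x0: "x0 \<in> \<Omega>" "u x0 \<le> 0" "\<forall>y. u x0 \<le> u y"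
    proof -
      have "xm \<in> \<Omega>" if "u xm < 0"
      proof (rule ccontr)
        assume "xm \<notin> \<Omega>"
        then have "0 \<le> u xm" using outside by auto
        then show False using that by simp
      qed
      then show "x0 \<in> \<Omega>" "u x0 \<le> 0"
        using x1 unfolding x0_def by auto
      show "\<forall>y. u x0 \<le> u y"
      proof
        fix y
        show "u x0 \<le> u y"
        proof (cases "y \<in> closure \<Omega>")
          case True
          then show ?thesis using xm x1 unfolding x0_def by force
        next
          case False
          then have "y \<notin> \<Omega>" using closure_subset by blast
          then have "u y \<ge> 0" using outside by auto
          then show ?thesis using x1 xm unfolding x0_def by auto
        qed
      qed
    qed
    have dux0: "(u has_derivative (\<lambda>h. G x0 \<bullet> h)) (at x0)" using du x0 by auto
    have dGx0: "(G has_derivative blinfun_apply (H x0)) (at x0)" using dG x0 by auto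
    have G0: "G x0 = 0"
    proof -
      have "(\<lambda>h. G x0 \<bullet> h) = (\<lambda>h. 0)"
        by (rule has_derivative_local_min[OF dux0]) (use x0 in \<open>simp add: always_eventually\<close>)
      then have "G x0 \<bullet> G x0 = 0" by metis
      then show ?thesis by simp
    qed
    have grad_eq: "grad u x = G x" if "x \<in> \<Omega>" for x
    proof -
      have "frechet_derivative u (at x) = (\<lambda>h. G x \<bullet> h)"
        using frechet_derivative_at[of u "\<lambda>h. G x \<bullet> h" x] du that by auto
      then show ?thesis unfolding grad_def by (simp add: euclidean_representation)
    qed
    have lap: "laplacian u x0 \<ge> 0"
    proof -
      have "(grad u has_derivative blinfun_apply (H x0)) (at x0)"
        by (rule has_derivative_transform_within_open[OF dGx0 opn x0(1)]) (use grad_eq in auto)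
      then have "frechet_derivative (grad u) (at x0) = blinfun_apply (H x0)"
        by (metis frechet_derivative_at)
      then show ?thesis unfolding laplacian_def
        by (simp, intro sum_nonneg hess_nonneg[OF opn x0(1) du dGx0 x0(3) G0])
    qed
    have gradx0: "grad u x0 = 0" using grad_eq[OF x0(1)] G0 by simp
    show False
    proof (cases "\<forall>y. u y = u x0")
      case True
      obtain y where "y \<notin> \<Omega>" using bnd by (metis not_bounded_UNIV subsetI subset_antisym UNIV_I)
      then have "u y \<ge> 0" using outside by auto
      then have "u x0 = 0" using True x0 by (metis order.antisym)
      then show False using True nz by auto
    next
      case False
      then obtain y1 where y1: "u x0 < u y1" using x0 by (metis order_le_imp_less_or_eq)
      obtain r K where rK: "r > 0" "K \<ge> 0" "ball x0 r \<subseteq> \<Omega>"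
          "\<forall>y\<in>ball x0 r. \<bar>u y - u x0\<bar> \<le> K * norm (y - x0)^2"
        using quad_bound[OF opn x0(1) du dGx0 G0] by blast
      define g where "g y = (u x0 - u y) / norm (x0 - y) powr (real DIM('a) + 2 * s)" for y
      have gi: "integrable lebesgue g"
        unfolding g_def by (rule g_integrable[OF cont L s rK(1,2,4)])
      have [measurable]: "u \<in> borel_measurable borel" using cont by (rule borel_measurable_continuous_onI)
      have gm: "g \<in> borel_measurable lebesgue" unfolding g_def by (intro bl) measurable
      have gle: "g y \<le> 0" for y
        unfolding g_def using x0(3) by (intro divide_nonpos_nonneg) auto
      have gx0: "g x0 = 0" unfolding g_def by simp
      have tend: "((\<lambda>\<epsilon>. (\<integral>y \<in> - ball x0 \<epsilon>. g y \<partial>lebesgue)) \<longlongrightarrow> integral\<^sup>L lebesgue g) (at_right 0)"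
        unfolding filterlim_at_right_to_top set_lebesgue_integral_def
      proof (rule integral_dominated_convergence_at_top[where w="\<lambda>y. norm (g y)"])
        show "g \<in> borel_measurable lebesgue" by (rule gm)
        show "(\<lambda>y. indicator (- ball x0 (inverse t)) y *\<^sub>R g y) \<in> borel_measurable lebesgue" for t
          using gm by (intro borel_measurable_scaleR borel_measurable_indicator) auto
        show "integrable lebesgue (\<lambda>y. norm (g y))" using gi by simp
        show "\<forall>\<^sub>F i in at_top. AE x in lebesgue. norm (indicator (- ball x0 (inverse i)) x *\<^sub>R g x) \<le> norm (g x)"
          by (intro always_eventually allI AE_I2) (simp add: indicator_def)
        show "AE x in lebesgue. ((\<lambda>i. indicator (- ball x0 (inverse i)) x *\<^sub>R g x) \<longlongrightarrow> g x) at_top"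
        proof (intro AE_I2)
          fix y
          show "((\<lambda>i. indicator (- ball x0 (inverse i)) y *\<^sub>R g y) \<longlongrightarrow> g y) at_top"
          proof (cases "y = x0")
            case True
            then show ?thesis using gx0 by simp
          next
            case False
            then have d: "dist x0 y > 0" by simp
            have "eventually (\<lambda>i. indicator (- ball x0 (inverse i)) y *\<^sub>R g y = g y) at_top"
              using eventually_gt_at_top[of "inverse (dist x0 y)"]
            proof eventually_elim
              case (elim t)
              then have "inverse t < dist x0 y" using d
                by (metis inverse_inverse_eq inverse_less_imp_less inverse_positive_iff_positive)
              then show ?case by (simp add: indicator_def)
            qed
            then show ?thesis by (rule tendsto_eventually)
          qed
        qed
      qed
      have fl: "frac_lap s u x0 = frac_const DIM('a) s * integral\<^sup>L lebesgue g"
        unfolding frac_lap_def g_def[symmetric]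
        using tendsto_Lim[OF trivial_limit_at_right_real tend] by simp
      have cpos: "frac_const DIM('a) s > 0"
        unfolding frac_const_def using s by (intro divide_pos_pos mult_pos_pos) auto
      have ineg: "integral\<^sup>L lebesgue g < 0"
      proof -
        have le: "integral\<^sup>L lebesgue g \<le> 0"
          using integral_nonneg_AE[of "\<lambda>y. - g y" lebesgue] gle by simp
        have "integral\<^sup>L lebesgue g \<noteq> 0"
        proof
          assume "integral\<^sup>L lebesgue g = 0"
          then have "integral\<^sup>L lebesgue (\<lambda>y. - g y) = 0" by simp
          then have ae: "AE y in lebesgue. - g y = 0"
            using integral_nonneg_eq_0_iff_AE[of lebesgue "\<lambda>y. - g y"] gi gle by simp
          have "open {y. u x0 < u y}" using cont by (intro open_Collect_less) auto
          then obtain \<epsilon> where \<epsilon>: "\<epsilon> > 0" "ball y1 \<epsilon> \<subseteq> {y. u x0 < u y}"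
            using y1 open_contains_ball by blast
          have "AE y in lebesgue. y \<notin> ball y1 \<epsilon>"
            using ae
          proof eventually_elim
            case (elim y)
            show ?case
            proof
              assume yb: "y \<in> ball y1 \<epsilon>"
              then have "u x0 < u y" using \<epsilon> by auto
              then have "y \<noteq> x0" by auto
              then have "g y < 0" unfolding g_def using \<open>u x0 < u y\<close>
                by (intro divide_neg_pos) auto
              then show False using elim by simp
            qed
          qed
          then have "emeasure lebesgue (ball y1 \<epsilon>) = 0"
            by (subst (asm) AE_iff_measurable[of "ball y1 \<epsilon>"]) auto
          moreover have "emeasure lebesgue (ball y1 \<epsilon>) > 0"
          proof -
            have "measure lborel (ball y1 \<epsilon>) > 0" using content_ball_pos[OF \<epsilon>(1)] by simp
            then have "measure lebesgue (ball y1 \<epsilon>) > 0" by simp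
            then show ?thesis using emeasure_eq_measure2[OF lmeasurable_ball[of y1 \<epsilon>]] by simp
          qed
          ultimately show False by simp
        qed
        with le show ?thesis by simp
      qed
      have "frac_lap s u x0 < 0" unfolding fl using cpos ineg by (simp add: mult_pos_neg)
      moreover have "- laplacian u x0 + frac_lap s u x0 + q x0 \<bullet> grad u x0 \<ge> 0" using ineq x0 by auto
      ultimately show False using lap gradx0 by simp
    qed
  qed
qed

end
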